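(* Let $q$ be a prime power, $m\ge2$, and $\lambda$ a positive divisor of $q+1$ with $\lambda<q+1$; let $n=\frac{q^m+1}{\lambda}$. Then $\mathrm{ord}_n(q)=2m$. Moreover, for every $s\in\mathbb{Z}_n$, the $q$-cyclotomic coset of $s$ modulo $n$ is $C_s=\{y_{s,k},\,n-y_{s,k}:0\le k\le m-1\}$, where $y_{s,k}=sq^k\bmod n$.
   Context: For $0\le s\le n-1$, the $q$-cyclotomic coset of $s$ modulo $n$ is $C_s=\{sq^i\bmod n:0\le i\le \mathrm{ord}_n(q)-1\}$. *)

theory Defs
  imports "HOL-Number_Theory.Number_Theory"
begin

definition cyclotomic_coset :: "nat \<Rightarrow> nat \<Rightarrow> nat \<Rightarrow> nat set" where
  "cyclotomic_coset q n s = {(s * q ^ i) mod n | i. i \<le> ord n q - 1}"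

end

theory Submission
  imports Defs
begin

lemma neg_mod_lemma:
  fixes n x y :: nat
  assumes "n dvd x + y" "n > 0"
  shows "y mod n = (n - x mod n) mod n"
proof -
  have "(x mod n + y mod n) mod n = 0" using assms by (simp add: mod_add_eq dvd_eq_mod_eq_0)
  moreover have "x mod n < n" "y mod n < n" using assms by auto
  ultimately show ?thesis
  proof -
    assume h: "(x mod n + y mod n) mod n = 0" "x mod n < n" "y mod n < n"
    show ?thesis
    proof (cases "x mod n = 0")
      case True thus ?thesis using h by simp
    next
      case False
      hence "x mod n + y mod n \<ge> n"
        using h(1) by (metis add_is_0 mod_less linorder_not_less)
      hence "x mod n + y mod n = n" using h by (simp add: le_mod_geq)
      thus ?thesis using h by simp
    qed
  qed
qed

theorem lemma5:
  fixes q m lam n :: nat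
  assumes "primepow q"
    and "m \<ge> 2"
    and "lam > 0" and "lam dvd q + 1" and "lam < q + 1"
    and "lam dvd q ^ m + 1"
    and "n = (q ^ m + 1) div lam"
  shows "ord n q = 2 * m \<and>
    (\<forall>s < n. cyclotomic_coset q n s =
       (\<Union>k<m. {(s * q ^ k) mod n, (n - (s * q ^ k) mod n) mod n}))"
proof -
  have q2: "q \<ge> 2" using assms(1) primepow_gt_Suc_0 by fastforce
  have nl: "n * lam = q ^ m + 1" using assms(6,7) by simp
  have ndvd: "n dvd q ^ m + 1" using nl by (metis dvd_triv_left)
  obtain c where c: "q + 1 = lam * c" using assms(4) by blast
  have "c \<ge> 2" using c assms(5) by (cases c; cases "c - 1"; auto)
  hence l2: "2 * lam \<le> q + 1" using c by (metis mult.commute mult_le_mono2)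
  have qm: "q ^ m = q * q ^ (m - 1)" using assms(2) by (metis Suc_diff_1 le_trans one_le_numeral not_one_le_zero
      le_0_eq neq0_conv power_Suc)
  have qpos: "q ^ (m-1) \<ge> 2" using q2 assms(2)
    by (metis One_nat_def Suc_pred diff_is_0_eq le_trans less_one linorder_not_less not_less_eq_eq
        numeral_2_eq_2 power_increasing power_one_right one_le_numeral zero_less_diff)
  have "(q ^ (m - 1) + 1) * (q + 1) < 2 * (q ^ m + 1)"
  proof -
    have "(q ^ (m - 1) + 1) * (q + 1) = q ^ m + q ^ (m-1) + q + 1" using qm by (simp add: algebra_simps)
    moreover have "q ^ (m-1) + q < q ^ m + 1"
    proof -
      have "(q ^ (m-1) - 1) * (q - 1) > 0" using q2 qpos by simp
      hence "q ^ (m-1) * q + 1 > q ^ (m-1) + q" using q2 qpos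
        by (simp add: algebra_simps diff_mult_distrib diff_mult_distrib2)
      thus ?thesis using qm by (simp add: mult.commute)
    qed
    ultimately show ?thesis by simp
  qed
  also have "2 * (q ^ m + 1) = n * (2 * lam)" using nl by simp
  also have "\<dots> \<le> n * (q + 1)" using mult_le_mono2[OF l2, of n] by simp
  finally have nbig: "q ^ (m - 1) + 1 < n" by (meson mult_less_cancel2)
  hence n4: "n > 2" using qpos by simp
  have cm: "[int q ^ m = - 1] (mod int n)"
  proof -
    have "int n dvd int (q ^ m + 1)" using ndvd by (simp only: of_nat_dvd_iff)
    hence "int n dvd int q ^ m + 1" by (simp only: of_nat_add of_nat_power of_nat_1)
    thus ?thesis by (simp add: cong_iff_dvd_diff)
  qed
  have cop: "coprime n q"
  proof (rule coprimeI)
    fix d assume "d dvd n" "d dvd q"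
    have "d dvd q ^ m + 1" using ndvd \<open>d dvd n\<close> by (rule dvd_trans[rotated])
    moreover have "d dvd q ^ m" using \<open>d dvd q\<close> qm by simp
    ultimately have "d dvd 1" using dvd_add_right_iff by blast
    thus "is_unit d" by simp
  qed
  have c2m: "[q ^ (2*m) = 1] (mod n)"
  proof -
    have "[int q ^ (2*m) = (-1)^2] (mod int n)" using cong_pow[OF cm, of 2] by (simp add: power_mult mult.commute)
    hence "[int q ^ (2*m) = 1] (mod int n)" by simp
    thus ?thesis by (simp add: cong_int_iff[symmetric])
  qed
  have notone: "\<not> [q ^ d = 1] (mod n)" if d: "0 < d" "d < 2*m" for d
  proof
    assume h: "[q ^ d = 1] (mod n)"
    hence hi: "[int q ^ d = 1] (mod int n)" by (simp add: cong_int_iff[symmetric])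
    consider "d < m" | "d = m" | "m < d" by linarith
    thus False
    proof cases
      case 1
      have "q ^ d \<ge> 1" using q2 by simp
      hence "n dvd q ^ d - 1" using h cong_altdef_nat[of 1 "q ^ d" n] by blast
      moreover have "q ^ d - 1 > 0" using one_less_power[of q d] q2 d by simp
      ultimately have "n \<le> q ^ d - 1" by (simp add: dvd_imp_le)
      moreover have "q ^ d \<le> q ^ (m-1)" using 1 q2 by (intro power_increasing) auto
      ultimately show False using nbig by linarith
    next
      case 2
      have "[1 = int q ^ m] (mod int n)" using cong_sym[OF hi] 2 by simp
      hence "[1 = (-1::int)] (mod int n)" using cm by (rule cong_trans)
      hence "int n dvd 2" by (simp add: cong_iff_dvd_diff)
      hence "int n dvd int 2" by simp
      hence "n dvd 2" by (simp only: of_nat_dvd_iff)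
      hence "n \<le> 2" by (simp add: dvd_imp_le)
      thus False using n4 by simp
    next
      case 3
      define k where "k = d - m"
      have dk: "d = m + k" "k \<le> m - 1" using 3 d k_def by auto
      have "[int q ^ d = (-1) * (int q ^ k)] (mod int n)"
        using cong_mult[OF cm cong_refl[of "int q ^ k"]] dk by (simp add: power_add)
      hence "[1 = (-1) * (int q ^ k)] (mod int n)" using cong_sym[OF hi] by (rule cong_trans[rotated])
      hence "[1 = - (int q ^ k)] (mod int n)" by simp
      hence "int n dvd int (q ^ k + 1)" by (simp add: cong_iff_dvd_diff)
      hence "n dvd q ^ k + 1" by (simp only: of_nat_dvd_iff)
      hence "n \<le> q ^ k + 1" by (simp add: dvd_imp_le)
      moreover have "q ^ k \<le> q ^ (m-1)" using dk q2 by (intro power_increasing) auto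
      ultimately show False using nbig by linarith
    qed
  qed
  have ordeq: "ord n q = 2 * m"
  proof -
    have "ord n q dvd 2*m" using c2m ord_divides by blast
    moreover have "ord n q > 0" using cop by simp
    ultimately have le: "ord n q \<le> 2*m" using assms(2) by (simp add: dvd_imp_le)
    have "\<not> ord n q < 2 * m" using notone[of "ord n q"] ord[of q n] \<open>ord n q > 0\<close> by blast
    thus ?thesis using le by simp
  qed
  have key: "(s * q ^ (m + k)) mod n = (n - (s * q ^ k) mod n) mod n" for s k
  proof (rule neg_mod_lemma)
    show "n dvd s * q ^ k + s * q ^ (m + k)"
    proof -
      have "s * q ^ k + s * q ^ (m + k) = (s * q ^ k) * (q ^ m + 1)" by (simp add: algebra_simps power_add)
      moreover have "n dvd (s * q ^ k) * (q ^ m + 1)" using ndvd by (rule dvd_mult)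
      ultimately show ?thesis by (simp only:)
    qed
    show "n > 0" using n4 by simp
  qed
  have "cyclotomic_coset q n s = (\<Union>k<m. {(s * q ^ k) mod n, (n - (s * q ^ k) mod n) mod n})" for s
  proof
    show "cyclotomic_coset q n s \<subseteq> (\<Union>k<m. {(s * q ^ k) mod n, (n - (s * q ^ k) mod n) mod n})"
    proof
      fix x assume "x \<in> cyclotomic_coset q n s"
      then obtain i where i: "i \<le> 2*m - 1" "x = s * q ^ i mod n" unfolding cyclotomic_coset_def ordeq by auto
      show "x \<in> (\<Union>k<m. {(s * q ^ k) mod n, (n - (s * q ^ k) mod n) mod n})"
      proof (cases "i < m")
        case True thus ?thesis using i by auto
      next
        case False
        hence "i = m + (i - m)" "i - m < m" using i assms(2) by auto
        hence "x = (n - (s * q ^ (i-m)) mod n) mod n" using i key[of s "i - m"] by simp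
        thus ?thesis using \<open>i - m < m\<close> by blast
      qed
    qed
  next
    show "(\<Union>k<m. {(s * q ^ k) mod n, (n - (s * q ^ k) mod n) mod n}) \<subseteq> cyclotomic_coset q n s"
    proof
      fix x assume "x \<in> (\<Union>k<m. {(s * q ^ k) mod n, (n - (s * q ^ k) mod n) mod n})"
      then obtain k where k: "k < m" "x = s * q ^ k mod n \<or> x = (n - (s * q ^ k) mod n) mod n" by auto
      thus "x \<in> cyclotomic_coset q n s"
      proof (cases "x = s * q ^ k mod n")
        case True thus ?thesis unfolding cyclotomic_coset_def ordeq using k by auto
      next
        case False
        hence "x = s * q ^ (m + k) mod n" using k key by simp
        moreover have "m + k \<le> 2*m - 1" using k by simp
        ultimately show ?thesis unfolding cyclotomic_coset_def ordeq by blast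
      qed
    qed
  qed
  thus ?thesis using ordeq by blast
qed

end
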